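(* Let $t\in\mathbb{N}$ and let $H$ be a graph whose vertex set is the union of pairwise disjoint sets $A$, $B$, $C$ such that: (1) $A$ and $B$ are independent sets, each of size $3t^2+t$; (2) $A$ and $B$ are complete to each other; (3) $|C|\ge 2$ and $H[C]$ is a path with endpoints $x$ and $y$; (4) both $x$ and $y$ have neighbours in $A\cup B$, and $C\setminus\{x,y\}$ is anticomplete to $A\cup B$; (5) $\deg_H(x)=2$; (6) $N(x)\cap(A\cup B)\neq N(y)\cap(A\cup B)$. Then $H\xrightarrow{\cap} tS_{t,t,t}$.
   Context: All graphs are finite and simple. For graphs $G_1=(V_1,E_1)$, $G_2=(V_2,E_2)$, $G_1\cap G_2=(V_1\cap V_2, E_1\cap E_2)$. For a graph $G=(V,E)$ and an injective map $\alpha$ on $V$, $G^{\alpha}$ has vertex set $\alpha(V)$ and edge set $\{\{\alpha(v),\alpha(w)\}: \{v,w\}\in E\}$. We write $G\xrightarrow{\cap} H$ if $H$ is (isomorphic to) $G^{\alpha_1}\cap\cdots\cap G^{\alpha_k}$ for some $k\ge1$ and injective maps $\alpha_1,\dots,\alpha_k$ on $V(G)$. For integers $a,b,c\ge1$, $S_{a,b,c}$ is the tree consisting of a vertex of degree $3$ together with three pendant paths having $a$, $b$, $c$ edges respectively; $tS_{t,t,t}$ is the disjoint union of $t$ copies of $S_{t,t,t}$. Sets are complete (anticomplete) to each other if all (no) edges between them are present. *)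

theory Defs
  imports Main
begin

text \<open>A graph is a pair (vertex set, edge set); edges are 2-element vertex sets.\<close>
type_synonym 'a graph = "'a set \<times> 'a set set"

definition verts :: "'a graph \<Rightarrow> 'a set" where "verts G = fst G"
definition edges :: "'a graph \<Rightarrow> 'a set set" where "edges G = snd G"

definition simple_graph :: "'a graph \<Rightarrow> bool" where
  "simple_graph G \<longleftrightarrow> finite (verts G) \<and>
     (\<forall>e\<in>edges G. \<exists>u v. u \<noteq> v \<and> e = {u, v} \<and> u \<in> verts G \<and> v \<in> verts G)"

definition graph_iso :: "'a graph \<Rightarrow> 'b graph \<Rightarrow> bool" where
  "graph_iso G H \<longleftrightarrow> (\<exists>f. bij_betw f (verts G) (verts H) \<and>
     (\<forall>e. e \<in> edges G \<longleftrightarrow> (e \<subseteq> verts G \<and> f ` e \<in> edges H)))"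

definition gimage :: "('a \<Rightarrow> 'b) \<Rightarrow> 'a graph \<Rightarrow> 'b graph" where
  "gimage \<alpha> G = (\<alpha> ` verts G, (\<lambda>e. \<alpha> ` e) ` edges G)"

definition ginter :: "'a graph \<Rightarrow> 'a graph \<Rightarrow> 'a graph" where
  "ginter G1 G2 = (verts G1 \<inter> verts G2, edges G1 \<inter> edges G2)"

definition ginter_images :: "nat \<Rightarrow> (nat \<Rightarrow> 'a \<Rightarrow> 'b) \<Rightarrow> 'a graph \<Rightarrow> 'b graph" where
  "ginter_images k \<alpha> G =
     ((\<Inter>i\<in>{..<k}. verts (gimage (\<alpha> i) G)), (\<Inter>i\<in>{..<k}. edges (gimage (\<alpha> i) G)))"

text \<open>G -\<inter>-> H. The injective maps take values in nat; since V(G) is finite,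
  any family of injections into any set can be transported into nat.\<close>
definition int_reaches :: "'a graph \<Rightarrow> 'c graph \<Rightarrow> bool" where
  "int_reaches G H \<longleftrightarrow> (\<exists>k \<ge> 1. \<exists>\<alpha> :: nat \<Rightarrow> 'a \<Rightarrow> nat.
      (\<forall>i<k. inj_on (\<alpha> i) (verts G)) \<and> graph_iso H (ginter_images k \<alpha> G))"

definition nbhd :: "'a graph \<Rightarrow> 'a \<Rightarrow> 'a set" where
  "nbhd G v = {w. {v, w} \<in> edges G}"

definition degree :: "'a graph \<Rightarrow> 'a \<Rightarrow> nat" where
  "degree G v = card (nbhd G v)"

definition induced :: "'a graph \<Rightarrow> 'a set \<Rightarrow> 'a graph" where
  "induced G S = (S, {e \<in> edges G. e \<subseteq> S})"

definition is_path_ends :: "'a graph \<Rightarrow> 'a \<Rightarrow> 'a \<Rightarrow> bool" where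
  "is_path_ends G x y \<longleftrightarrow> (\<exists>ps. ps \<noteq> [] \<and> distinct ps \<and> set ps = verts G \<and>
      hd ps = x \<and> last ps = y \<and>
      edges G = {{ps ! i, ps ! (i+1)} | i. i + 1 < length ps})"

definition independent :: "'a graph \<Rightarrow> 'a set \<Rightarrow> bool" where
  "independent G S \<longleftrightarrow> (\<forall>u\<in>S. \<forall>v\<in>S. {u, v} \<notin> edges G)"

definition complete_to :: "'a graph \<Rightarrow> 'a set \<Rightarrow> 'a set \<Rightarrow> bool" where
  "complete_to G S T \<longleftrightarrow> (\<forall>u\<in>S. \<forall>v\<in>T. {u, v} \<in> edges G)"

definition anticomplete_to :: "'a graph \<Rightarrow> 'a set \<Rightarrow> 'a set \<Rightarrow> bool" where
  "anticomplete_to G S T \<longleftrightarrow> (\<forall>u\<in>S. \<forall>v\<in>T. {u, v} \<notin> edges G)"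

text \<open>The spider S_{a,b,c}: centre (0,0); leg j \<in> {1,2,3} has vertices (j,l), 1 \<le> l \<le> len j.\<close>
definition spider :: "nat \<Rightarrow> nat \<Rightarrow> nat \<Rightarrow> (nat \<times> nat) graph" where
  "spider a b c = (let len = (\<lambda>j. if j = 1 then a else if j = 2 then b else c) in
     (insert (0,0) {(j, l). j \<in> {1,2,3} \<and> 1 \<le> l \<and> l \<le> len j},
      {{(0,0), (j,1)} | j. j \<in> {1,2,3} \<and> 1 \<le> len j} \<union>
      {{(j,l), (j,l+1)} | j l. j \<in> {1,2,3} \<and> 1 \<le> l \<and> l + 1 \<le> len j}))"

definition tSttt :: "nat \<Rightarrow> (nat \<times> nat \<times> nat) graph" where
  "tSttt t = ({(i, v) | i v. i < t \<and> v \<in> verts (spider t t t)},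
              {(\<lambda>v. (i, v)) ` e | i e. i < t \<and> e \<in> edges (spider t t t)})"

end

theory Submission
  imports Defs "HOL-Library.Nat_Bijection"
begin


lemma reduce:
  fixes H :: "'a graph" and T :: "'b graph" and \<phi> :: "'c \<Rightarrow> 'b \<Rightarrow> 'a" and I :: "'c set"
  assumes sH: "simple_graph H" and fI: "finite I" and cI: "2 \<le> card I" and fT: "finite (verts T)"
    and Te: "\<And>e. e \<in> edges T \<Longrightarrow> \<exists>u v. u \<noteq> v \<and> e = {u,v} \<and> u \<in> verts T \<and> v \<in> verts T"
    and inj: "\<And>i. i \<in> I \<Longrightarrow> inj_on (\<phi> i) (verts T)"
    and img: "\<And>i. i \<in> I \<Longrightarrow> \<phi> i ` verts T \<subseteq> verts H"
    and hom: "\<And>i u v. i \<in> I \<Longrightarrow> {u,v} \<in> edges T \<Longrightarrow> {\<phi> i u, \<phi> i v} \<in> edges H"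
    and sep: "\<And>u v. u \<in> verts T \<Longrightarrow> v \<in> verts T \<Longrightarrow> u \<noteq> v \<Longrightarrow> {u,v} \<notin> edges T \<Longrightarrow> \<exists>i\<in>I. {\<phi> i u, \<phi> i v} \<notin> edges H"
  shows "int_reaches H T"
proof -
  obtain en :: "'b \<Rightarrow> nat" where en: "inj_on en (verts T)"
    using finite_imp_inj_to_nat_seg[OF fT] by blast
  have fH: "finite (verts H)" using sH by (simp add: simple_graph_def)
  obtain hn :: "'a \<Rightarrow> nat" where hn: "inj_on hn (verts H)"
    using finite_imp_inj_to_nat_seg[OF fH] by blast
  define k where "k = card I"
  obtain ix where ix: "bij_betw ix {0..<k} I"
    using ex_bij_betw_nat_finite[OF fI] k_def by blast
  have ixI: "m < k \<Longrightarrow> ix m \<in> I" for m using ix by (auto simp: bij_betw_def)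
  define \<psi> where "\<psi> m = \<phi> (ix m)" for m
  define f where "f v = 2 * en v" for v
  define \<alpha> where "\<alpha> m h = (if h \<in> \<psi> m ` verts T then f (the_inv_into (verts T) (\<psi> m) h)
        else 2 * prod_encode (m, hn h) + 1)" for m h
  have injf: "inj_on f (verts T)" using en by (auto simp: inj_on_def f_def)
  have injpsi: "m < k \<Longrightarrow> inj_on (\<psi> m) (verts T)" for m using inj ixI \<psi>_def by auto
  have al1: "\<alpha> m (\<psi> m v) = f v" if "m < k" "v \<in> verts T" for m v
    using that injpsi by (simp add: \<alpha>_def the_inv_into_f_f)
  have al2: "h = \<psi> m v" if "m < k" "v \<in> verts T" "\<alpha> m h = f v" for m v h
  proof (cases "h \<in> \<psi> m ` verts T")
    case True
    then obtain w where w: "w \<in> verts T" "h = \<psi> m w" by blast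
    then have "f w = f v" using al1 that by metis
    then have "w = v" using injf w that by (meson inj_onD)
    then show ?thesis using w by simp
  next
    case False
    then have "\<alpha> m h = 2 * prod_encode (m, hn h) + 1" by (simp add: \<alpha>_def)
    then have False using that(3) unfolding f_def by presburger
    then show ?thesis ..
  qed
  have odd: "\<alpha> m h = 2 * prod_encode (m, hn h) + 1" if "h \<notin> \<psi> m ` verts T" for m h
    using that by (simp add: \<alpha>_def)
  have injal: "inj_on (\<alpha> m) (verts H)" if "m < k" for m
  proof (rule inj_onI)
    fix h1 h2 assume h: "h1 \<in> verts H" "h2 \<in> verts H" "\<alpha> m h1 = \<alpha> m h2"
    show "h1 = h2"
    proof (cases "h1 \<in> \<psi> m ` verts T")
      case True
      then obtain w where w: "w \<in> verts T" "h1 = \<psi> m w" by blast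
      then have "\<alpha> m h2 = f w" using al1 h that by metis
      then have "h2 = \<psi> m w" using al2 that w by blast
      then show ?thesis using w by simp
    next
      case False
      show ?thesis
      proof (cases "h2 \<in> \<psi> m ` verts T")
        case True
        then obtain w where w: "w \<in> verts T" "h2 = \<psi> m w" by blast
        then have "\<alpha> m h1 = f w" using al1 h that by metis
        then have "h1 = \<psi> m w" using al2 that w by blast
        then show ?thesis using w by simp
      next
        case F2: False
        have "prod_encode (m, hn h1) = prod_encode (m, hn h2)" using odd[OF False] odd[OF F2] h by simp
        then have "hn h1 = hn h2" by simp
        then show ?thesis using hn h by (meson inj_onD)
      qed
    qed
  qed
  have k2: "2 \<le> k" using cI k_def by simp
  have VG: "(\<Inter>m\<in>{..<k}. \<alpha> m ` verts H) = f ` verts T"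
  proof
    show "f ` verts T \<subseteq> (\<Inter>m\<in>{..<k}. \<alpha> m ` verts H)"
    proof (rule subsetI, rule INT_I)
      fix z m assume "z \<in> f ` verts T" "m \<in> {..<k}"
      then obtain v where "v \<in> verts T" "m \<in> {..<k}" "z = f v" by blast
      then have "\<psi> m v \<in> verts H" "\<alpha> m (\<psi> m v) = f v" using img ixI \<psi>_def al1 by auto
      then show "z \<in> \<alpha> m ` verts H" using \<open>z = f v\<close> by (metis image_eqI)
    qed
  next
    show "(\<Inter>m\<in>{..<k}. \<alpha> m ` verts H) \<subseteq> f ` verts T"
    proof
      fix z assume z: "z \<in> (\<Inter>m\<in>{..<k}. \<alpha> m ` verts H)"
      then obtain h0 where h0: "z = \<alpha> 0 h0" using k2 by fastforce
      obtain h1 where h1: "z = \<alpha> 1 h1" using z k2 by fastforce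
      show "z \<in> f ` verts T"
      proof (cases "h0 \<in> \<psi> 0 ` verts T")
        case True
        then obtain w where "w \<in> verts T" "h0 = \<psi> 0 w" by blast
        then show ?thesis using al1 h0 k2 by auto
      next
        case False
        show ?thesis
        proof (cases "h1 \<in> \<psi> 1 ` verts T")
          case True
          then obtain w where "w \<in> verts T" "h1 = \<psi> 1 w" by blast
          then show ?thesis using al1 h1 k2 by auto
        next
          case F1: False
          have "prod_encode (0, hn h0) = prod_encode (1, hn h1)"
            using odd[OF False] odd[OF F1] h0 h1 by simp
          then show ?thesis by simp
        qed
      qed
    qed
  qed
  define G where "G = ginter_images k \<alpha> H"
  have vG: "verts G = f ` verts T"
    using VG by (simp add: G_def ginter_images_def gimage_def verts_def)
  have eG: "edges G = (\<Inter>m\<in>{..<k}. (\<lambda>e. \<alpha> m ` e) ` edges H)"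
    by (simp add: G_def ginter_images_def edges_def gimage_def)
  have iso: "graph_iso T G"
    unfolding graph_iso_def
  proof (intro exI conjI allI)
    show "bij_betw f (verts T) (verts G)" using vG injf by (simp add: bij_betw_def)
    fix e
    show "e \<in> edges T \<longleftrightarrow> (e \<subseteq> verts T \<and> f ` e \<in> edges G)"
    proof
      assume e: "e \<in> edges T"
      then obtain u v where uv: "u \<noteq> v" "e = {u,v}" "u \<in> verts T" "v \<in> verts T" using Te by blast
      have "f ` e \<in> (\<lambda>e. \<alpha> m ` e) ` edges H" if "m < k" for m
      proof -
        have "{\<psi> m u, \<psi> m v} \<in> edges H" using hom ixI that e uv \<psi>_def by auto
        moreover have "\<alpha> m ` {\<psi> m u, \<psi> m v} = f ` e" using al1 that uv by simp
        ultimately show ?thesis by (metis image_eqI)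
      qed
      then show "e \<subseteq> verts T \<and> f ` e \<in> edges G" using uv eG by auto
    next
      assume a: "e \<subseteq> verts T \<and> f ` e \<in> edges G"
      then have sub: "e \<subseteq> verts T" and fe: "\<And>m. m < k \<Longrightarrow> f ` e \<in> (\<lambda>e. \<alpha> m ` e) ` edges H"
        using eG by auto
      obtain e0 where e0: "e0 \<in> edges H" "f ` e = \<alpha> 0 ` e0" using fe[of 0] k2 by auto
      obtain h1 h2 where hh: "h1 \<noteq> h2" "e0 = {h1,h2}" "h1 \<in> verts H" "h2 \<in> verts H"
        using sH e0(1) unfolding simple_graph_def by blast
      have "\<alpha> 0 h1 \<noteq> \<alpha> 0 h2" using injal[of 0] k2 hh by (metis inj_onD zero_less_numeral order_less_le_trans)
      then have c2: "card (f ` e) = 2" using e0 hh by simp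
      have fe2: "finite e" using sub fT finite_subset by blast
      have "card e = 2" using c2 card_image injf sub by (metis inj_on_subset)
      then obtain u v where uv: "u \<noteq> v" "e = {u,v}" by (meson card_2_iff)
      show "e \<in> edges T"
      proof (rule ccontr)
        assume ne: "e \<notin> edges T"
        obtain i where i: "i \<in> I" "{\<phi> i u, \<phi> i v} \<notin> edges H"
          using sep[of u v] uv sub ne by auto
        obtain m where m: "m < k" "ix m = i" using ix i(1) by (metis atLeastLessThan_iff bij_betw_iff_bijections)
        obtain e1 where e1: "e1 \<in> edges H" "f ` e = \<alpha> m ` e1" using fe[OF m(1)] by auto
        obtain g1 g2 where gg: "g1 \<noteq> g2" "e1 = {g1,g2}"
          using sH e1(1) unfolding simple_graph_def by blast
        have uT: "u \<in> verts T" "v \<in> verts T" using sub uv by auto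
        have "\<alpha> m g1 \<in> {f u, f v}" "\<alpha> m g2 \<in> {f u, f v}" using e1 gg uv by auto
        then have "g1 \<in> {\<psi> m u, \<psi> m v}" "g2 \<in> {\<psi> m u, \<psi> m v}"
          using al2[OF m(1)] uT by blast+
        then have "e1 = {\<psi> m u, \<psi> m v}" using gg by auto
        then show False using e1 i m \<psi>_def by simp
      qed
    qed
  qed
  show ?thesis unfolding int_reaches_def
    using k2 injal iso G_def by (intro exI[of _ k] conjI exI[of _ \<alpha>]) auto
qed




lemma spider_verts: "verts (spider t t t) = insert (0,0) {(j,l). j \<in> {1,2,3} \<and> 1 \<le> l \<and> l \<le> t}"
proof -
  have e: "\<And>j::nat. (if j = 1 then t else if j = 2 then t else t) = t" by simp
  show ?thesis unfolding spider_def Let_def e by (simp add: verts_def)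
qed

lemma spider_edges: "edges (spider t t t) = {{(0,0),(j,1)} | j. j\<in>{1,2,3} \<and> 1 \<le> t} \<union>
   {{(j,l),(j,l+1)} | j l. j\<in>{1,2,3} \<and> 1\<le>l \<and> l+1\<le>t}"
proof -
  have e: "\<And>j::nat. (if j = 1 then t else if j = 2 then t else t) = t" by simp
  show ?thesis unfolding spider_def Let_def e by (simp add: edges_def)
qed

definition Vx :: "nat \<Rightarrow> nat \<Rightarrow> nat \<Rightarrow> nat \<times> nat \<times> nat" where
  "Vx i j l = (i, if l = 0 then (0,0) else (j,l))"

lemma VT: "(i,v) \<in> verts (tSttt t) \<longleftrightarrow> i < t \<and> (v = (0,0) \<or> (\<exists>j l. v = (j,l) \<and> j \<in> {1,2,3} \<and> 1 \<le> l \<and> l \<le> t))"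
  by (auto simp: tSttt_def verts_def[of "(_,_)"] spider_verts)

lemma ET0: "edges (tSttt t) = {(\<lambda>v. (i, v)) ` e | i e. i < t \<and> e \<in> edges (spider t t t)}"
  unfolding tSttt_def edges_def[of "(_,_)"] by (rule snd_conv)

lemma ET: "e \<in> edges (tSttt t) \<longleftrightarrow> (\<exists>i j l. i<t \<and> j\<in>{1,2,3} \<and> l+1 \<le> t \<and> e = {Vx i j l, Vx i j (l+1)})"
proof
  assume "e \<in> edges (tSttt t)"
  then obtain i e' where ie: "i < t" "e' \<in> edges (spider t t t)" "e = (\<lambda>v. (i,v)) ` e'"
    unfolding ET0 by blast
  from ie(2)[unfolded spider_edges] show "\<exists>i j l. i<t \<and> j\<in>{1,2,3} \<and> l+1 \<le> t \<and> e = {Vx i j l, Vx i j (l+1)}"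
  proof (rule UnE)
    assume "e' \<in> {{(0,0),(j,1)} | j. j\<in>{1,2,3} \<and> 1 \<le> t}"
    then obtain j where j: "j\<in>{1,2,3}" "1 \<le> t" "e' = {(0,0),(j,1)}" by blast
    have "e = {Vx i j 0, Vx i j (0+1)}" using j(3) ie(3) by (simp add: Vx_def)
    then show ?thesis using ie(1) j(1,2) by (intro exI[of _ i] exI[of _ j] exI[of _ 0]) simp
  next
    assume "e' \<in> {{(j,l),(j,l+1)} | j l. j\<in>{1,2,3} \<and> 1\<le>l \<and> l+1\<le>t}"
    then obtain j l where j: "j\<in>{1,2,3}" "1 \<le> l" "l+1 \<le> t" "e' = {(j,l),(j,l+1)}" by blast
    have "e = {Vx i j l, Vx i j (l+1)}" using j(2,4) ie(3) by (simp add: Vx_def)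
    then show ?thesis using ie(1) j(1,3) by (intro exI[of _ i] exI[of _ j] exI[of _ l]) simp
  qed
next
  assume "\<exists>i j l. i<t \<and> j\<in>{1,2,3} \<and> l+1 \<le> t \<and> e = {Vx i j l, Vx i j (l+1)}"
  then obtain i j l where h: "i<t" "j\<in>{1,2,3}" "l+1 \<le> t" "e = {Vx i j l, Vx i j (l+1)}" by blast
  show "e \<in> edges (tSttt t)"
  proof (cases "l = 0")
    case True
    have "{(0,0),(j,1)} \<in> {{(0,0),(j,1)} | j. j\<in>{1,2,3} \<and> 1 \<le> t}" using h True
      by (intro CollectI exI[of _ j]) simp
    then have "{(0,0),(j,1)} \<in> edges (spider t t t)" unfolding spider_edges by (rule UnI1)
    moreover have "e = (\<lambda>v. (i,v)) ` {(0,0),(j,1)}" using h True by (simp add: Vx_def)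
    ultimately show ?thesis using h(1) unfolding ET0
      by (intro CollectI exI[of _ i] exI[of _ "{(0,0),(j,1)}"] conjI) simp_all
  next
    case False
    have "{(j,l),(j,l+1)} \<in> {{(j,l),(j,l+1)} | j l. j\<in>{1,2,3} \<and> 1\<le>l \<and> l+1\<le>t}" using h False
      by (intro CollectI exI[of _ j] exI[of _ l]) simp
    then have "{(j,l),(j,l+1)} \<in> edges (spider t t t)" unfolding spider_edges by (rule UnI2)
    moreover have "e = (\<lambda>v. (i,v)) ` {(j,l),(j,l+1)}" using h False by (simp add: Vx_def)
    ultimately show ?thesis using h(1) unfolding ET0
      by (intro CollectI exI[of _ i] exI[of _ "{(j,l),(j,l+1)}"] conjI) simp_all
  qed
qed

lemma VT_sub: "verts (tSttt t) \<subseteq> {..<t} \<times> insert (0,0) ({1,2,3} \<times> {1..t})"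
  using VT by fastforce

lemma VT_fin: "finite (verts (tSttt t))"
  by (rule finite_subset[OF VT_sub]) auto

lemma VT_card: "card (verts (tSttt t)) \<le> 3*t^2+t"
proof -
  have "card (verts (tSttt t)) \<le> card ({..<t} \<times> insert (0::nat,0::nat) ({1,2,3} \<times> {1..t}))"
    by (rule card_mono[OF _ VT_sub]) auto
  also have "\<dots> \<le> t * (1 + 3 * t)"
  proof -
    have "card (insert (0::nat,0::nat) ({1::nat,2,3} \<times> {1..t})) \<le> 1 + card ({1::nat,2,3} \<times> {1..t})"
      by (rule card_insert_le_m1) auto
    also have "card ({1::nat,2,3} \<times> {1..t}) = 3 * t" by (simp add: card_cartesian_product)
    finally show ?thesis by (simp add: card_cartesian_product)
  qed
  also have "\<dots> = 3*t^2+t" by (simp add: power2_eq_square algebra_simps)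
  finally show ?thesis .
qed

lemma Te: "e \<in> edges (tSttt t) \<Longrightarrow> \<exists>u v. u \<noteq> v \<and> e = {u,v} \<and> u \<in> verts (tSttt t) \<and> v \<in> verts (tSttt t)"
proof -
  assume "e \<in> edges (tSttt t)"
  then obtain i j l where h: "i<t" "j\<in>{1,2,3}" "l+1 \<le> t" "e = {Vx i j l, Vx i j (l+1)}"
    unfolding ET by blast
  show ?thesis using h by (intro exI[of _ "Vx i j l"] exI[of _ "Vx i j (l+1)"]) (auto simp: Vx_def VT)
qed

lemma Vx_simps[simp]: "fst (Vx i j l) = i" "fst (snd (Vx i j l)) = (if l = 0 then 0 else j)"
  "snd (snd (Vx i j l)) = l"
  by (auto simp: Vx_def)

lemma Vx_pos: "0 < l \<Longrightarrow> Vx i j l = (i,(j,l))" by (simp add: Vx_def)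

lemma inj_extend:
  assumes "finite U" "finite S" "card U \<le> card S" "D \<subseteq> U" "inj_on h D" "h ` D \<subseteq> S"
  shows "\<exists>g. inj_on g U \<and> g ` U \<subseteq> S \<and> (\<forall>d\<in>D. g d = h d)"
proof -
  have fD: "finite D" using assms finite_subset by blast
  have "card (U - D) = card U - card D" using assms fD by (simp add: card_Diff_subset)
  moreover have "card (S - h ` D) = card S - card D"
    using assms fD by (simp add: card_Diff_subset card_image finite_subset)
  ultimately have "card (U - D) \<le> card (S - h ` D)" using assms by simp
  then obtain f where f: "f ` (U - D) \<subseteq> S - h ` D" "inj_on f (U - D)"
    using card_le_inj[of "U - D" "S - h ` D"] assms by auto
  define g where "g u = (if u \<in> D then h u else f u)" for u
  have "inj_on g U"
  proof (rule inj_onI)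
    fix u v assume uv: "u \<in> U" "v \<in> U" "g u = g v"
    show "u = v"
    proof (cases "u \<in> D"; cases "v \<in> D")
      assume "u \<in> D" "v \<in> D" then show ?thesis using uv assms(5) by (simp add: g_def inj_on_def)
    next
      assume a: "u \<in> D" "v \<notin> D"
      then have "f v \<in> S - h ` D" using f(1) uv(2) by blast
      moreover have "g u = h u" "g v = f v" using a by (auto simp: g_def)
      ultimately show ?thesis using uv(3) a(1) by (metis DiffD2 imageI)
    next
      assume a: "u \<notin> D" "v \<in> D"
      then have "f u \<in> S - h ` D" using f(1) uv(1) by blast
      moreover have "g v = h v" "g u = f u" using a by (auto simp: g_def)
      ultimately show ?thesis using uv(3) a(2) by (metis DiffD2 imageI)
    next
      assume "u \<notin> D" "v \<notin> D" then show ?thesis using uv f(2) by (simp add: g_def inj_on_def)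
    qed
  qed
  moreover have "g ` U \<subseteq> S" using f assms by (auto simp: g_def)
  moreover have "\<forall>d\<in>D. g d = h d" by (simp add: g_def)
  ultimately show ?thesis by blast
qed




locale setting =
  fixes H :: "'a graph" and A B :: "'a set" and ps :: "'a list" and m t :: nat and a s0 :: 'a
  assumes AB: "A \<inter> B = {}" and fA: "finite A" and fB: "finite B"
  and cA: "card A = 3*t^2+t" and cB: "card B = 3*t^2+t"
  and indA: "\<And>u v. u\<in>A \<Longrightarrow> v\<in>A \<Longrightarrow> {u,v} \<notin> edges H"
  and indB: "\<And>u v. u\<in>B \<Longrightarrow> v\<in>B \<Longrightarrow> {u,v} \<notin> edges H"
  and comp: "\<And>u v. u\<in>A \<Longrightarrow> v\<in>B \<Longrightarrow> {u,v} \<in> edges H"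
  and ABH: "A \<subseteq> verts H" "B \<subseteq> verts H" and psH: "set ps \<subseteq> verts H"
  and dps: "distinct ps" and lps: "length ps = m+1" and m1: "1 \<le> m"
  and psAB: "set ps \<inter> (A\<union>B) = {}"
  and pe: "\<And>i. i < m \<Longrightarrow> {ps!i, ps!(i+1)} \<in> edges H"
  and aAB: "a \<in> A\<union>B" and xa: "{ps!0, a} \<in> edges H"
  and s0AB: "s0 \<in> A\<union>B" and s0a: "s0 \<noteq> a" and ys0: "{ps!m, s0} \<in> edges H"
  and nx: "\<And>z. {ps!0, z} \<in> edges H \<Longrightarrow> z = a \<or> z = ps!1"
begin

abbreviation "VT \<equiv> verts (tSttt t)"

lemma copy:
  assumes st: "s<t" and jj: "j\<in>{1,2,3}" and l1: "1\<le>l" and lt: "l\<le>t"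
  shows "\<exists>\<phi>. inj_on \<phi> VT \<and> \<phi>`VT \<subseteq> verts H \<and>
     (\<forall>i j' l'. i < t \<longrightarrow> j' \<in> {1,2,3} \<longrightarrow> l'+1 \<le> t \<longrightarrow> {\<phi> (Vx i j' l'), \<phi> (Vx i j' (l'+1))} \<in> edges H) \<and>
     \<phi> (s,(j,l)) = ps!0 \<and>
     (\<forall>v\<in>VT. {ps!0, \<phi> v} \<in> edges H \<longrightarrow> v = Vx s j (l-1) \<or> (v = Vx s j (l+1) \<and> l+1 \<le> t)) \<and>
     (\<forall>i<t. \<forall>i'<t. {\<phi> (i,(0,0)), \<phi> (i',(0,0))} \<notin> edges H)"
proof -
  define p where "p = Vx s j (l-1)"
  define q where "q = (s,(j,l+m+1))"
  define hasq where "hasq = (l+m+1 \<le> t)"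
  define cpos where "cpos v = (fst v = s \<and> fst (snd v) = j \<and> l \<le> snd (snd v) \<and> snd (snd v) \<le> l+m)" for v :: "nat \<times> nat \<times> nat"
  define bey where "bey v = (fst v = s \<and> fst (snd v) = j \<and> l+m < snd (snd v))" for v :: "nat \<times> nat \<times> nat"
  define par where "par v = snd (snd v) mod 2" for v :: "nat \<times> nat \<times> nat"
  define chi where "chi v = (if bey v then (s0\<in>A \<longleftrightarrow> par v = par q) else (a\<in>A \<longleftrightarrow> par v = par p))" for v
  define DA where "DA = {v. (v = p \<and> a\<in>A) \<or> (v = q \<and> hasq \<and> s0\<in>A)}"
  define DB where "DB = {v. (v = p \<and> a\<in>B) \<or> (v = q \<and> hasq \<and> s0\<in>B)}"
  define hh where "hh v = (if v = p then a else s0)" for v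
  have j0: "j \<noteq> 0" using jj by auto
  have pVT: "p \<in> VT" using st jj l1 lt by (auto simp: p_def Vx_def VT)
  have qVT: "hasq \<Longrightarrow> q \<in> VT" using st jj l1 lt by (auto simp: q_def hasq_def VT)
  have pq: "p \<noteq> q" by (auto simp: p_def q_def Vx_def)
  have fVT: "finite VT" by (rule VT_fin)
  have card: "card VT \<le> card A" "card VT \<le> card B" using VT_card cA cB by auto
  have hinj: "inj_on hh D" if "D \<subseteq> {p,q}" for D using s0a that by (auto simp: hh_def inj_on_def)
  have DAs: "DA \<subseteq> {p,q}" "DB \<subseteq> {p,q}" by (auto simp: DA_def DB_def)
  have DAV: "DA \<subseteq> VT" "DB \<subseteq> VT" using pVT qVT by (auto simp: DA_def DB_def)
  have DAi: "hh ` DA \<subseteq> A" "hh ` DB \<subseteq> B" using pq by (auto simp: DA_def DB_def hh_def)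
  obtain gA where gA: "inj_on gA VT" "gA ` VT \<subseteq> A" "\<forall>d\<in>DA. gA d = hh d"
    using inj_extend[OF fVT fA card(1) DAV(1) hinj[OF DAs(1)] DAi(1)] by blast
  obtain gB where gB: "inj_on gB VT" "gB ` VT \<subseteq> B" "\<forall>d\<in>DB. gB d = hh d"
    using inj_extend[OF fVT fB card(2) DAV(2) hinj[OF DAs(2)] DAi(2)] by blast
  define \<phi> where "\<phi> v = (if cpos v then ps!(snd (snd v) - l) else if chi v then gA v else gB v)" for v
  have ncp: "\<not> cpos p" "\<not> bey p" "bey q" "\<not> cpos q" using l1 by (auto simp: cpos_def bey_def p_def q_def)
  have phip: "\<phi> p = a"
  proof (cases "a \<in> A")
    case True
    then have "p \<in> DA" by (simp add: DA_def)
    then have "gA p = a" using gA(3) by (simp add: hh_def)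
    then show ?thesis using ncp True by (simp add: \<phi>_def chi_def)
  next
    case False then have "a \<in> B" using aAB by auto
    then have "p \<in> DB" by (simp add: DB_def)
    then have "gB p = a" using gB(3) by (simp add: hh_def)
    then show ?thesis using ncp False by (simp add: \<phi>_def chi_def)
  qed
  have phiq: "\<phi> q = s0" if hq: hasq
  proof (cases "s0 \<in> A")
    case True
    then have "q \<in> DA" using hq by (simp add: DA_def)
    then have "gA q = s0" using gA(3) pq by (simp add: hh_def)
    then show ?thesis using ncp True by (simp add: \<phi>_def chi_def)
  next
    case False then have "s0 \<in> B" using s0AB by auto
    then have "q \<in> DB" using hq by (simp add: DB_def)
    then have "gB q = s0" using gB(3) pq by (simp add: hh_def)
    then show ?thesis using ncp False by (simp add: \<phi>_def chi_def)
  qed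
  have phiAB: "v \<in> VT \<Longrightarrow> \<not> cpos v \<Longrightarrow> (chi v \<longrightarrow> \<phi> v \<in> A) \<and> (\<not> chi v \<longrightarrow> \<phi> v \<in> B)" for v
    using gA gB by (auto simp: \<phi>_def)
  have emain: "{\<phi> v, \<phi> w} \<in> edges H" if "v \<in> VT" "w \<in> VT" "\<not> cpos v" "\<not> cpos w" "chi v \<noteq> chi w" for v w
  proof (cases "chi v")
    case True
    then show ?thesis using phiAB that comp by auto
  next
    case False
    then have "\<phi> w \<in> A" "\<phi> v \<in> B" using phiAB that by auto
    then show ?thesis using comp by (metis insert_commute)
  qed
  have cps: "v \<in> VT \<Longrightarrow> cpos v \<Longrightarrow> \<phi> v = ps!(snd (snd v) - l) \<and> snd (snd v) - l \<le> m" for v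
    by (auto simp: \<phi>_def cpos_def)
  have VTform: "v \<in> VT \<Longrightarrow> cpos v \<Longrightarrow> v = (s,(j, snd (snd v)))" for v
    by (cases v) (auto simp: cpos_def)
  have parVx: "par (Vx i j' l') = l' mod 2" for i j' l' by (simp add: par_def)
  have chidiff: "chi v \<noteq> chi w" if "\<not> bey v \<and> \<not> bey w \<or> bey v \<and> bey w" "par v \<noteq> par w" for v w
    using that unfolding chi_def par_def by auto
  have hom: "{\<phi> (Vx i j' l'), \<phi> (Vx i j' (l'+1))} \<in> edges H"
    if h: "i < t" "j' \<in> {1,2,3}" "l'+1 \<le> t" for i j' l'
  proof -
    let ?v = "Vx i j' l'" and ?w = "Vx i j' (l'+1)"
    have vT: "?v \<in> VT" "?w \<in> VT" using h by (auto simp: Vx_def VT)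
    have pd: "par ?v \<noteq> par ?w" unfolding parVx by presburger
    show ?thesis
    proof (cases "i = s \<and> j' = j")
      case False
      then have "\<not> cpos ?v" "\<not> cpos ?w" "\<not> bey ?v" "\<not> bey ?w" using j0 l1
        by (auto simp: cpos_def bey_def)
      then show ?thesis using emain vT chidiff pd by blast
    next
      case True
      then have ij: "i = s" "j' = j" by auto
      consider "l'+1 < l" | "l'+1 = l" | "l \<le> l' \<and> l'+1 \<le> l+m" | "l' = l+m" | "l+m < l'" by linarith
      then show ?thesis
      proof cases
        case 1
        then have "\<not> cpos ?v" "\<not> cpos ?w" "\<not> bey ?v" "\<not> bey ?w" by (auto simp: cpos_def bey_def)
        then show ?thesis using emain vT chidiff pd by blast
      next
        case 2
        then have "?v = p" "?w = (s,(j,l))" using ij by (auto simp: p_def Vx_def)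
        moreover have "cpos (s,(j,l))" by (simp add: cpos_def)
        ultimately show ?thesis using phip xa by (simp add: \<phi>_def insert_commute)
      next
        case 3
        then have "cpos ?v" "cpos ?w" using ij l1 by (auto simp: cpos_def)
        then have "\<phi> ?v = ps!(l'-l)" "\<phi> ?w = ps!(l'-l+1)" using 3 by (auto simp: \<phi>_def Suc_diff_le)
        moreover have "l'-l < m" using 3 by linarith
        ultimately show ?thesis using pe[of "l'-l"] by simp
      next
        case 4
        then have "cpos ?v" using ij l1 by (auto simp: cpos_def)
        then have "\<phi> ?v = ps!m" using 4 by (auto simp: \<phi>_def)
        moreover have "?w = q" "hasq" using 4 ij h by (auto simp: q_def hasq_def Vx_def)
        ultimately show ?thesis using phiq ys0 by simp
      next
        case 5
        then have "\<not> cpos ?v" "\<not> cpos ?w" "bey ?v" "bey ?w" using ij l1 j0 by (auto simp: cpos_def bey_def)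
        then show ?thesis using emain vT chidiff pd by blast
      qed
    qed
  qed
  have psm: "ps!i \<in> set ps" if "i \<le> m" for i using that lps by simp
  have injphi: "inj_on \<phi> VT"
  proof (rule inj_onI)
    fix v w assume vw: "v \<in> VT" "w \<in> VT" "\<phi> v = \<phi> w"
    show "v = w"
    proof (cases "cpos v"; cases "cpos w")
      assume c: "cpos v" "cpos w"
      then have "ps!(snd (snd v) - l) = ps!(snd (snd w) - l)" "snd (snd v) - l \<le> m" "snd (snd w) - l \<le> m"
        using cps vw by auto
      then have "snd (snd v) - l = snd (snd w) - l" using dps lps nth_eq_iff_index_eq by fastforce
      then have "snd (snd v) = snd (snd w)" using c by (auto simp: cpos_def)
      then show ?thesis using VTform c vw by metis
    next
      assume c: "cpos v" "\<not> cpos w"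
      then have "\<phi> v \<in> set ps" "\<phi> w \<in> A \<union> B" using cps psm phiAB vw by (metis, blast)
      then show ?thesis using psAB vw by auto
    next
      assume c: "\<not> cpos v" "cpos w"
      then have "\<phi> w \<in> set ps" "\<phi> v \<in> A \<union> B" using cps psm phiAB vw by (metis, blast)
      then show ?thesis using psAB vw by auto
    next
      assume c: "\<not> cpos v" "\<not> cpos w"
      show ?thesis
      proof (cases "chi v = chi w")
        case True
        then show ?thesis using c vw gA(1) gB(1) by (auto simp: \<phi>_def inj_on_def split: if_splits)
      next
        case False
        then have "\<phi> v \<in> A \<and> \<phi> w \<in> B \<or> \<phi> v \<in> B \<and> \<phi> w \<in> A"
          using c vw phiAB[of v] phiAB[of w] by (cases "chi v") auto
        then show ?thesis using vw AB by auto
      qed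
    qed
  qed
  have imgH: "\<phi> ` VT \<subseteq> verts H"
  proof
    fix z assume "z \<in> \<phi> ` VT"
    then obtain v where v: "v \<in> VT" "z = \<phi> v" by blast
    show "z \<in> verts H"
    proof (cases "cpos v")
      case True
      have "\<phi> v \<in> set ps" using cps[OF v(1) True] psm by simp
      then show ?thesis using psH v(2) by blast
    next
      case False then show ?thesis using phiAB ABH v by blast
    qed
  qed
  have phix: "\<phi> (s,(j,l)) = ps!0" by (simp add: \<phi>_def cpos_def)
  have nbr: "v = Vx s j (l-1) \<or> (v = Vx s j (l+1) \<and> l+1 \<le> t)" if v: "v \<in> VT" "{ps!0, \<phi> v} \<in> edges H" for v
  proof -
    have "\<phi> v = a \<or> \<phi> v = ps!1" by (rule nx[OF v(2)])
    then show ?thesis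
    proof
      assume pa: "\<phi> v = a"
      have "\<not> cpos v"
      proof
        assume cv: "cpos v" then have "\<phi> v \<in> set ps" using cps[OF v(1) cv] psm by simp
        then show False using pa aAB psAB by auto
      qed
      then have "\<phi> v = \<phi> p" using pa phip by simp
      then have "v = p" using injphi v pVT by (meson inj_onD)
      then show ?thesis by (simp add: p_def)
    next
      assume p1: "\<phi> v = ps!1"
      have "cpos v"
      proof (rule ccontr)
        assume "\<not> cpos v" then have "\<phi> v \<in> A \<union> B" using phiAB v by blast
        moreover have "ps!1 \<in> set ps" using psm m1 by simp
        ultimately show False using p1 psAB by auto
      qed
      then have "ps!(snd (snd v) - l) = ps!1" "snd (snd v) - l \<le> m" using cps v p1 by auto
      moreover have "snd (snd v) - l < length ps" "1 < length ps" using lps m1 calculation(2) by auto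
      ultimately have "snd (snd v) - l = 1" using nth_eq_iff_index_eq[OF dps] by metis
      then have "snd (snd v) = l + 1" using \<open>cpos v\<close> by (auto simp: cpos_def)
      moreover then have "l + 1 \<le> t" using v(1) VT by (cases v) auto
      moreover have "v = (s,(j, snd (snd v)))" by (rule VTform[OF v(1) \<open>cpos v\<close>])
      ultimately show ?thesis by (simp add: Vx_def)
    qed
  qed
  have cent: "{\<phi> (i,(0,0)), \<phi> (i',(0,0))} \<notin> edges H" if "i < t" "i' < t" for i i'
  proof -
    have vT: "(i,(0,0)) \<in> VT" "(i',(0,0)) \<in> VT" using that by (auto simp: VT)
    have nc: "\<not> cpos (i,(0,0))" "\<not> cpos (i',(0,0))" "\<not> bey (i,(0,0))" "\<not> bey (i',(0,0))"
      using j0 by (auto simp: cpos_def bey_def)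
    then have "chi (i,(0,0)) = chi (i',(0,0))" by (simp add: chi_def par_def)
    then show ?thesis using phiAB[OF vT(1) nc(1)] phiAB[OF vT(2) nc(2)] indA indB by (cases "chi (i,(0,0))") auto
  qed
  have hom': "\<forall>i j' l'. i < t \<longrightarrow> j' \<in> {1,2,3} \<longrightarrow> l'+1 \<le> t \<longrightarrow> {\<phi> (Vx i j' l'), \<phi> (Vx i j' (l'+1))} \<in> edges H"
    using hom by blast
  have nbr': "\<forall>v\<in>VT. {ps!0, \<phi> v} \<in> edges H \<longrightarrow> v = Vx s j (l-1) \<or> (v = Vx s j (l+1) \<and> l+1 \<le> t)"
    using nbr by blast
  have cent': "\<forall>i<t. \<forall>i'<t. {\<phi> (i,(0,0)), \<phi> (i',(0,0))} \<notin> edges H"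
    using cent by blast
  show ?thesis
    by (rule exI[of _ \<phi>], intro conjI, fact injphi, fact imgH, fact hom', fact phix, fact nbr', fact cent')
qed


lemma result:
  assumes sH: "simple_graph H" and t1: "1 \<le> t"
  shows "int_reaches H (tSttt t)"
proof -
  define I where "I = {(s,j,l). s<t \<and> j\<in>{1::nat,2,3} \<and> 1\<le>l \<and> l\<le>t}"
  define P where "P c \<phi> = (inj_on \<phi> VT \<and> \<phi>`VT \<subseteq> verts H \<and>
     (\<forall>i j' l'. i < t \<longrightarrow> j' \<in> {1,2,3} \<longrightarrow> l'+1 \<le> t \<longrightarrow> {\<phi> (Vx i j' l'), \<phi> (Vx i j' (l'+1))} \<in> edges H) \<and>
     \<phi> (fst c,(fst (snd c),snd (snd c))) = ps!0 \<and>
     (\<forall>v\<in>VT. {ps!0, \<phi> v} \<in> edges H \<longrightarrow> v = Vx (fst c) (fst (snd c)) (snd (snd c)-1) \<or> (v = Vx (fst c) (fst (snd c)) (snd (snd c)+1) \<and> snd (snd c)+1 \<le> t)) \<and>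
     (\<forall>i<t. \<forall>i'<t. {\<phi> (i,(0,0)), \<phi> (i',(0,0))} \<notin> edges H))" for c :: "nat \<times> nat \<times> nat" and \<phi>
  have ex: "\<exists>\<phi>. P c \<phi>" if "c \<in> I" for c
  proof -
    obtain s j l where c0: "c = (s,j,l)" by (cases c)
    then have c: "c = (s,j,l)" "s<t" "j\<in>{1,2,3}" "1\<le>l" "l\<le>t" using that by (auto simp: I_def)
    show ?thesis unfolding P_def c(1) fst_conv snd_conv by (rule copy[OF c(2-5)])
  qed
  define \<Phi> where "\<Phi> c = (SOME \<phi>. P c \<phi>)" for c
  have P\<Phi>: "P c (\<Phi> c)" if "c \<in> I" for c
    using ex[OF that] unfolding \<Phi>_def by (rule someI_ex)
  have Pd1: "inj_on (\<Phi> c) VT" "\<Phi> c ` VT \<subseteq> verts H" if "c \<in> I" for c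
    using P\<Phi>[OF that] unfolding P_def by blast+
  have Pd2: "\<forall>i j' l'. i < t \<longrightarrow> j' \<in> {1,2,3} \<longrightarrow> l'+1 \<le> t \<longrightarrow> {\<Phi> c (Vx i j' l'), \<Phi> c (Vx i j' (l'+1))} \<in> edges H"
    if "c \<in> I" for c
    using P\<Phi>[OF that] unfolding P_def by blast
  have Pd3: "\<Phi> c (fst c,(fst (snd c),snd (snd c))) = ps!0" if "c \<in> I" for c
    using P\<Phi>[OF that] unfolding P_def by blast
  have Pd4: "\<forall>v\<in>VT. {ps!0, \<Phi> c v} \<in> edges H \<longrightarrow> v = Vx (fst c) (fst (snd c)) (snd (snd c)-1) \<or> (v = Vx (fst c) (fst (snd c)) (snd (snd c)+1) \<and> snd (snd c)+1 \<le> t)"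
    if "c \<in> I" for c
    using P\<Phi>[OF that] unfolding P_def by blast
  have Pd5: "\<forall>i<t. \<forall>i'<t. {\<Phi> c (i,(0,0)), \<Phi> c (i',(0,0))} \<notin> edges H" if "c \<in> I" for c
    using P\<Phi>[OF that] unfolding P_def by blast
  have fI: "finite I"
    by (rule finite_subset[of _ "{..<t} \<times> {1,2,3} \<times> {..t}"]) (auto simp: I_def)
  have cI: "2 \<le> card I"
  proof -
    have "{(0,1,1),(0,2,1)} \<subseteq> I" using t1 by (auto simp: I_def)
    from card_mono[OF fI this] show ?thesis by simp
  qed
  have c0: "(0,1,1) \<in> I" using t1 by (simp add: I_def)
  have homV: "{\<Phi> c (Vx i j' l'), \<Phi> c (Vx i j' (l'+1))} \<in> edges H"
    if "c \<in> I" "i < t" "j' \<in> {1,2,3}" "l'+1 \<le> t" for c i j' l'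
    using Pd2[OF that(1)] that(2-4) by blast
  have hom: "{\<Phi> c u, \<Phi> c v} \<in> edges H" if cin: "c \<in> I" and uvE: "{u,v} \<in> edges (tSttt t)" for c u v
  proof -
    obtain i j' l' where h: "i<t" "j'\<in>{1,2,3}" "l'+1 \<le> t" "{u,v} = {Vx i j' l', Vx i j' (l'+1)}"
      using uvE unfolding ET by blast
    from h(4) have "u = Vx i j' l' \<and> v = Vx i j' (l'+1) \<or> u = Vx i j' (l'+1) \<and> v = Vx i j' l'"
      by (auto simp: doubleton_eq_iff)
    then show ?thesis using homV[OF cin h(1-3)] by (auto simp: insert_commute)
  qed
  have legsep: "\<exists>c\<in>I. {\<Phi> c u, \<Phi> c v} \<notin> edges H"
    if "u = (i,(j,l))" "u \<in> VT" "v \<in> VT" "{u,v} \<notin> edges (tSttt t)" "0 < j" for u v i j l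
  proof -
    have ij: "i < t" "j \<in> {1,2,3}" "1 \<le> l" "l \<le> t" using that(1,2,5) by (auto simp: VT)
    then have cI': "(i,j,l) \<in> I" by (simp add: I_def)
    have "{\<Phi> (i,j,l) u, \<Phi> (i,j,l) v} \<notin> edges H"
    proof
      assume e: "{\<Phi> (i,j,l) u, \<Phi> (i,j,l) v} \<in> edges H"
      have "\<Phi> (i,j,l) u = ps!0" using Pd3[OF cI'] that(1) by simp
      then have "v = Vx i j (l-1) \<or> (v = Vx i j (l+1) \<and> l+1 \<le> t)"
        using Pd4[OF cI'] e that(3) by simp
      moreover have "u = Vx i j l" using that(1) ij by (simp add: Vx_def)
      ultimately have "{u,v} \<in> edges (tSttt t)"
        unfolding ET using ij
      proof (elim disjE conjE)
        assume "v = Vx i j (l-1)" "u = Vx i j l"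
        then show "\<exists>i' j' l'. i'<t \<and> j'\<in>{1,2,3} \<and> l'+1 \<le> t \<and> {u,v} = {Vx i' j' l', Vx i' j' (l'+1)}"
          using ij by (intro exI[of _ i] exI[of _ j] exI[of _ "l-1"]) (auto simp: insert_commute)
      next
        assume "v = Vx i j (l+1)" "l+1 \<le> t" "u = Vx i j l"
        then show "\<exists>i' j' l'. i'<t \<and> j'\<in>{1,2,3} \<and> l'+1 \<le> t \<and> {u,v} = {Vx i' j' l', Vx i' j' (l'+1)}"
          using ij by (intro exI[of _ i] exI[of _ j] exI[of _ l]) auto
      qed
      then show False using that(4) by simp
    qed
    then show ?thesis using cI' by blast
  qed
  have sep: "\<exists>c\<in>I. {\<Phi> c u, \<Phi> c v} \<notin> edges H"
    if uT: "u \<in> VT" and vT: "v \<in> VT" and neq: "u \<noteq> v" and ne: "{u,v} \<notin> edges (tSttt t)" for u v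
  proof -
    obtain iu ju lu where u: "u = (iu,(ju,lu))" by (cases u) auto
    obtain iv jv lv where v: "v = (iv,(jv,lv))" by (cases v) auto
    show ?thesis
    proof (cases "0 < ju")
      case True then show ?thesis using legsep[OF u uT vT ne] by blast
    next
      case False
      show ?thesis
      proof (cases "0 < jv")
        case True
        have "{v,u} \<notin> edges (tSttt t)" using ne by (simp add: insert_commute)
        then obtain c where "c \<in> I" "{\<Phi> c v, \<Phi> c u} \<notin> edges H" using legsep[OF v vT uT] True by blast
        then show ?thesis by (auto simp: insert_commute)
      next
        case F2: False
        have "u = (iu,(0,0))" "v = (iv,(0,0))" "iu < t" "iv < t" using u v False F2 uT vT by (auto simp: VT)
        moreover have "\<forall>i<t. \<forall>i'<t. {\<Phi> (0,1,1) (i,(0,0)), \<Phi> (0,1,1) (i',(0,0))} \<notin> edges H"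
          using Pd5[OF c0] by simp
        ultimately show ?thesis using c0 by blast
      qed
    qed
  qed
  note injP = Pd1
  show ?thesis
  proof (rule reduce[where \<phi>=\<Phi> and I=I])
    show "simple_graph H" by (rule sH)
    show "finite I" by (rule fI)
    show "2 \<le> card I" by (rule cI)
    show "finite VT" by (rule VT_fin)
    show "\<And>e. e \<in> edges (tSttt t) \<Longrightarrow> \<exists>u v. u \<noteq> v \<and> e = {u,v} \<and> u \<in> VT \<and> v \<in> VT"
      by (rule Te)
    show "\<And>i. i \<in> I \<Longrightarrow> inj_on (\<Phi> i) VT" by (rule injP(1))
    show "\<And>i. i \<in> I \<Longrightarrow> \<Phi> i ` VT \<subseteq> verts H" by (rule injP(2))
    show "\<And>i u v. i \<in> I \<Longrightarrow> {u,v} \<in> edges (tSttt t) \<Longrightarrow> {\<Phi> i u, \<Phi> i v} \<in> edges H"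
      by (rule hom)
    show "\<And>u v. u \<in> VT \<Longrightarrow> v \<in> VT \<Longrightarrow> u \<noteq> v \<Longrightarrow> {u,v} \<notin> edges (tSttt t) \<Longrightarrow> \<exists>i\<in>I. {\<Phi> i u, \<Phi> i v} \<notin> edges H"
      by (rule sep)
  qed
qed

end



theorem mainTheorem4:
  fixes H :: "'a graph" and A B C :: "'a set" and x y :: 'a and t :: nat
  assumes "simple_graph H"
    and "verts H = A \<union> B \<union> C"
    and "A \<inter> B = {}" and "A \<inter> C = {}" and "B \<inter> C = {}"
    and "independent H A" and "independent H B"
    and "card A = 3 * t^2 + t" and "card B = 3 * t^2 + t"
    and "complete_to H A B"
    and "card C \<ge> 2" and "is_path_ends (induced H C) x y"
    and "nbhd H x \<inter> (A \<union> B) \<noteq> {}" and "nbhd H y \<inter> (A \<union> B) \<noteq> {}"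
    and "anticomplete_to H (C - {x, y}) (A \<union> B)"
    and "degree H x = 2"
    and "nbhd H x \<inter> (A \<union> B) \<noteq> nbhd H y \<inter> (A \<union> B)"
  shows "int_reaches H (tSttt t)"
proof -
  note as = assms
  have fH: "finite (verts H)" using as(1) by (simp add: simple_graph_def)
  have subs: "A \<subseteq> verts H" "B \<subseteq> verts H" "C \<subseteq> verts H" using as(2) by auto
  have fA: "finite A" "finite B" "finite C"
    using finite_subset[OF subs(1) fH] finite_subset[OF subs(2) fH] finite_subset[OF subs(3) fH] by simp_all
  have "is_path_ends (C, {e \<in> edges H. e \<subseteq> C}) x y" using as(12) by (simp only: induced_def)
  then have "\<exists>ps. ps \<noteq> [] \<and> distinct ps \<and> set ps = C \<and> hd ps = x \<and> last ps = y \<and>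
     {e \<in> edges H. e \<subseteq> C} = {{ps ! i, ps ! (i+1)} | i. i + 1 < length ps}"
    unfolding is_path_ends_def verts_def edges_def fst_conv snd_conv .
  then obtain ps where ps: "ps \<noteq> []" "distinct ps" "set ps = C" "hd ps = x" "last ps = y"
     "{e \<in> edges H. e \<subseteq> C} = {{ps ! i, ps ! (i+1)} | i. i + 1 < length ps}"
    by blast
  define m where "m = length ps - 1"
  have lC: "length ps = card C" using distinct_card[OF ps(2)] ps(3) by simp
  have lps: "length ps = m + 1" and m1: "1 \<le> m" using lC as(11) m_def by auto
  have p0: "ps!0 = x" using ps by (simp add: hd_conv_nth)
  have pm: "ps!m = y" using ps m_def by (simp add: last_conv_nth)
  have pe: "{ps!i, ps!(i+1)} \<in> edges H" if "i < m" for i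
  proof -
    have "{ps!i, ps!(i+1)} \<in> {{ps ! i, ps ! (i+1)} | i. i + 1 < length ps}" using that lps
      by (intro CollectI exI[of _ i]) simp
    then have "{ps!i, ps!(i+1)} \<in> {e \<in> edges H. e \<subseteq> C}" unfolding ps(6) .
    then show ?thesis by simp
  qed
  have "1 < length ps" using lps m1 by simp
  then have ps1C: "ps!1 \<in> C" using ps(3) nth_mem by blast
  have x1: "ps!1 \<in> nbhd H x" using pe[of 0] m1 p0 by (simp add: nbhd_def)
  obtain a where a: "a \<in> nbhd H x" "a \<in> A \<union> B" using as(13) by blast
  have a1: "a \<noteq> ps!1" using a ps1C as(4,5) by auto
  have finN: "finite (nbhd H x)"
  proof (rule ccontr)
    assume "infinite (nbhd H x)"
    then have "card (nbhd H x) = 0" by simp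
    then show False using as(16) by (simp add: degree_def)
  qed
  have Nx: "nbhd H x = {a, ps!1}"
  proof -
    have sub: "{a, ps!1} \<subseteq> nbhd H x" using a x1 by auto
    have "card {a, ps!1} = 2" using a1 by simp
    then show ?thesis using card_subset_eq[OF finN sub] as(16) unfolding degree_def by simp
  qed
  have NxAB: "nbhd H x \<inter> (A \<union> B) = {a}" using Nx a ps1C as(4,5) by auto
  have ny: "nbhd H y \<inter> (A \<union> B) \<noteq> {a}" using as(17) NxAB by simp
  have "\<exists>s0. s0 \<in> nbhd H y \<inter> (A \<union> B) \<and> s0 \<noteq> a"
  proof (rule ccontr)
    assume "\<not> (\<exists>s0. s0 \<in> nbhd H y \<inter> (A \<union> B) \<and> s0 \<noteq> a)"
    then have "nbhd H y \<inter> (A \<union> B) \<subseteq> {a}" by blast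
    then show False using as(14) ny by (simp add: subset_singleton_iff)
  qed
  then obtain s0 where s0: "s0 \<in> nbhd H y" "s0 \<in> A \<union> B" "s0 \<noteq> a" by blast
  have t1: "1 \<le> t"
  proof (rule ccontr)
    assume "\<not> 1 \<le> t" then have "t = 0" by simp
    then have "A = {}" "B = {}" using as(8,9) fA by auto
    then show False using a by auto
  qed
  interpret setting H A B ps m t a s0
  proof
    show "A \<inter> B = {}" "finite A" "finite B" "card A = 3*t^2+t" "card B = 3*t^2+t"
      using as fA by auto
    show "\<And>u v. u\<in>A \<Longrightarrow> v\<in>A \<Longrightarrow> {u,v} \<notin> edges H" using as(6) by (simp add: independent_def)
    show "\<And>u v. u\<in>B \<Longrightarrow> v\<in>B \<Longrightarrow> {u,v} \<notin> edges H" using as(7) by (simp add: independent_def)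
    show "\<And>u v. u\<in>A \<Longrightarrow> v\<in>B \<Longrightarrow> {u,v} \<in> edges H" using as(10) by (simp add: complete_to_def)
    show "A \<subseteq> verts H" "B \<subseteq> verts H" "set ps \<subseteq> verts H" using as(2) ps(3) by auto
    show "distinct ps" "length ps = m+1" "1 \<le> m" using ps lps m1 by auto
    show "set ps \<inter> (A\<union>B) = {}" using ps(3) as(4,5) by auto
    show "\<And>i. i < m \<Longrightarrow> {ps!i, ps!(i+1)} \<in> edges H" by (rule pe)
    show "a \<in> A\<union>B" "{ps!0, a} \<in> edges H" using a p0 by (auto simp: nbhd_def)
    show "s0 \<in> A\<union>B" "s0 \<noteq> a" "{ps!m, s0} \<in> edges H" using s0 pm by (auto simp: nbhd_def)
    show "\<And>z. {ps!0, z} \<in> edges H \<Longrightarrow> z = a \<or> z = ps!1" using Nx p0 by (auto simp: nbhd_def)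
  qed
  show ?thesis by (rule result[OF as(1) t1])
qed


end
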